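(* Let $G$ be a finite simple graph with edge weight function $w$ and vertex weight function $w_1$, let $\theta$ be a real number, and let $p$ be a path of length at least $1$ in $G$. Then $\mathrm{mult}(\theta,G\setminus p)\ge \mathrm{mult}(\theta,G)-1$, where $G\setminus p$ denotes $G$ with all vertices of $p$ deleted.
   Context: An edge weight function $w$ assigns a nonzero complex number to each edge; a vertex weight function $w_1$ assigns a real number (possibly $0$) to each vertex; subgraphs carry restricted weights; deleting vertices also deletes incident edges. For $A\subseteq E(G)$, $w(A)=\prod_{e\in A}w(e)$. $\mu_w(G,x)=\sum_{M}(-1)^{|M|}|w(M)|^2x^{n-2|M|}$ over all matchings $M$ (including empty). $\eta_{(w,w_1)}(G,x)=\sum_{S\subseteq V(G)}(-1)^{|V(G)\setminus S|}\big(\prod_{y\in V(G)\setminus S}w_1(y)\big)\mu_w(G[S],x)$ with $G[S]$ the induced subgraph; $\mu_w,\eta_{(w,w_1)}$ of the empty graph equal $1$. $\mathrm{mult}(\theta,H)$ is the multiplicity of $\theta$ as a root of $\eta_{(w,w_1)}(H,x)$ ($0$ if not a root). *)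

theory Defs
  imports Complex_Main "HOL-Computational_Algebra.Polynomial"
begin

definition simple_graph :: "'a set \<Rightarrow> 'a set set \<Rightarrow> bool" where
  "simple_graph V E \<longleftrightarrow> finite V \<and>
     (\<forall>e\<in>E. \<exists>u v. u \<noteq> v \<and> u \<in> V \<and> v \<in> V \<and> e = {u, v})"

definition matchings :: "'a set set \<Rightarrow> 'a set set set" where
  "matchings E = {M. M \<subseteq> E \<and> (\<forall>e\<in>M. \<forall>f\<in>M. e \<noteq> f \<longrightarrow> e \<inter> f = {})}"

definition mu_w :: "'a set \<Rightarrow> 'a set set \<Rightarrow> ('a set \<Rightarrow> complex) \<Rightarrow> real poly" where
  "mu_w V E w = (\<Sum>M\<in>matchings E.
      monom ((-1) ^ card M * (cmod (\<Prod>e\<in>M. w e))^2) (card V - 2 * card M))"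

definition induced_edges :: "'a set set \<Rightarrow> 'a set \<Rightarrow> 'a set set" where
  "induced_edges E S = {e\<in>E. e \<subseteq> S}"

definition eta :: "'a set \<Rightarrow> 'a set set \<Rightarrow> ('a set \<Rightarrow> complex) \<Rightarrow> ('a \<Rightarrow> real) \<Rightarrow> real poly" where
  "eta V E w w1 = (\<Sum>S\<in>Pow V.
      smult ((-1) ^ card (V - S) * (\<Prod>y\<in>V - S. w1 y)) (mu_w S (induced_edges E S) w))"

definition mult :: "real \<Rightarrow> 'a set \<Rightarrow> 'a set set \<Rightarrow> ('a set \<Rightarrow> complex) \<Rightarrow> ('a \<Rightarrow> real) \<Rightarrow> nat" where
  "mult \<theta> V E w w1 = order \<theta> (eta V E w w1)"

text \<open>A path given by its vertex list; its length is the number of edges, length ps - 1.\<close>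
definition is_path :: "'a set \<Rightarrow> 'a set set \<Rightarrow> 'a list \<Rightarrow> bool" where
  "is_path V E ps \<longleftrightarrow> ps \<noteq> [] \<and> distinct ps \<and> set ps \<subseteq> V \<and>
     (\<forall>i. Suc i < length ps \<longrightarrow> {ps ! i, ps ! Suc i} \<in> E)"

definition del_verts :: "'a set \<Rightarrow> 'a set \<Rightarrow> 'a set" where
  "del_verts V D = V - D"
definition del_edges :: "'a set set \<Rightarrow> 'a set \<Rightarrow> 'a set set" where
  "del_edges E D = {e\<in>E. e \<inter> D = {}}"

end

theory Submission imports Defs begin

fun pw :: "('a set \<Rightarrow> complex) \<Rightarrow> 'a list \<Rightarrow> real" where
  "pw w (a # b # r) = (cmod (w {a,b}))^2 * pw w (b # r)"
| "pw w _ = 1"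

definition SOS :: "(real \<times> real poly) list \<Rightarrow> real poly" where
  "SOS F = sum_list (map (\<lambda>(c,q). smult c (q^2)) F)"

lemma prod_const_poly: "(\<Prod>x\<in>A. [:f x:]) = [:\<Prod>x\<in>A. f x:]"
  by (induction A rule: infinite_finite_induct) (auto simp: mult.commute)

lemma smult_sum_r: "smult a (sum f A) = (\<Sum>x\<in>A. smult a (f x))"
  by (induction A rule: infinite_finite_induct) (auto simp: smult_add_right)

lemma pderiv_sum': "pderiv (sum f A) = (\<Sum>x\<in>A. pderiv (f x))"
  by (induction A rule: infinite_finite_induct) (auto simp: pderiv_add)

lemma SOS_append: "SOS (a @ b) = SOS a + SOS b" unfolding SOS_def by simp
lemma SOS_concat: "SOS (concat Ls) = sum_list (map SOS Ls)"
  by (induction Ls) (auto simp: SOS_append, simp add: SOS_def)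
lemma SOS_sc: "SOS (map (\<lambda>(c,q). (k*c, q)) G) = smult k (SOS G)"
  unfolding SOS_def by (induction G) (auto simp: smult_add_right)
lemma SOS_Nil: "SOS [] = 0" unfolding SOS_def by simp
lemma SOS_single: "SOS [(c,q)] = smult c (q^2)" unfolding SOS_def by simp

lemma path_tl:
  assumes "is_path S E (u # P')" "P' \<noteq> []"
  shows "is_path (S - {u}) E P'" "{u, hd P'} \<in> E"
proof -
  show "is_path (S - {u}) E P'"
    unfolding is_path_def
  proof (intro conjI allI impI)
    show "P' \<noteq> []" by fact
    show "distinct P'" using assms(1) unfolding is_path_def by simp
    show "set P' \<subseteq> S - {u}" using assms(1) unfolding is_path_def by auto
    fix i assume "Suc i < length P'"
    then have "{(u#P') ! Suc i, (u#P') ! Suc (Suc i)} \<in> E" using assms(1) unfolding is_path_def by auto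
    then show "{P' ! i, P' ! Suc i} \<in> E" by simp
  qed
  have "{(u#P') ! 0, (u#P') ! Suc 0} \<in> E" using assms unfolding is_path_def by auto
  then show "{u, hd P'} \<in> E" using assms(2) by (simp add: hd_conv_nth)
qed

lemma distinct_hd_last: "distinct P \<Longrightarrow> P \<noteq> [] \<Longrightarrow> hd P = last P \<Longrightarrow> P = [hd P]"
  by (cases P) (auto, metis last_in_set)

lemma pw_pos: "\<forall>e\<in>E. w e \<noteq> 0 \<Longrightarrow> \<forall>i. Suc i < length P \<longrightarrow> {P!i, P!Suc i} \<in> E \<Longrightarrow> pw w P > 0"
proof (induction w P rule: pw.induct)
  case (1 w a b r)
  have "{a,b} \<in> E" using "1.prems"(2)[rule_format, of 0] by simp
  then have "w {a,b} \<noteq> 0" using "1.prems"(1) by blast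
  moreover have "pw w (b # r) > 0" using "1.IH" "1.prems" by (metis Suc_mono length_Cons nth_Cons_Suc)
  ultimately show ?case by simp
qed auto

locale wg =
  fixes E :: "'a set set" and w :: "'a set \<Rightarrow> complex" and w1 :: "'a \<Rightarrow> real"
  assumes edges: "\<And>e. e \<in> E \<Longrightarrow> \<exists>a b. a \<noteq> b \<and> e = {a,b}"
    and wnz: "\<And>e. e \<in> E \<Longrightarrow> w e \<noteq> 0"
begin

definition L :: "'a \<Rightarrow> real poly" where "L v = [:-w1 v, 1:]"
definition cM :: "'a set set \<Rightarrow> real" where
  "cM M = (-1)^card M * (cmod (\<Prod>e\<in>M. w e))^2"
definition g :: "'a set \<Rightarrow> real poly" where
  "g S = (\<Sum>M\<in>matchings (induced_edges E S). smult (cM M) (\<Prod>v\<in>S - \<Union>M. L v))"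
definition cw :: "'a \<Rightarrow> 'a \<Rightarrow> real" where "cw u v = (cmod (w {u,v}))^2"

lemma fin_match: "finite S \<Longrightarrow> finite (matchings (induced_edges E S))"
proof -
  assume "finite S"
  have "matchings (induced_edges E S) \<subseteq> Pow (Pow S)"
    unfolding matchings_def induced_edges_def by auto
  then show ?thesis using \<open>finite S\<close> by (meson finite_Pow_iff finite_subset)
qed

lemma match_Union_sub: "M \<in> matchings (induced_edges E S) \<Longrightarrow> \<Union>M \<subseteq> S"
  unfolding matchings_def induced_edges_def by auto

lemma matchings_sub: "T \<subseteq> S \<Longrightarrow> matchings (induced_edges E T) =
   {M \<in> matchings (induced_edges E S). \<Union>M \<subseteq> T}"
  unfolding matchings_def induced_edges_def by auto

lemma card_Union_match:
  assumes "M \<in> matchings (induced_edges E S)"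
  shows "card (\<Union>M) = 2 * card M"
proof -
  have ed: "\<And>e. e \<in> M \<Longrightarrow> card e = 2 \<and> finite e"
    using assms edges unfolding matchings_def induced_edges_def by fastforce
  have "pairwise disjnt M" using assms unfolding matchings_def pairwise_def disjnt_def by auto
  then have "card (\<Union>M) = sum card M" using card_Union_disjoint ed by blast
  also have "\<dots> = sum (\<lambda>_. 2) M" using ed by (intro sum.cong) auto
  finally show ?thesis by simp
qed

lemma expand:
  assumes "finite R"
  shows "(\<Prod>v\<in>R. L v) = (\<Sum>T\<in>Pow R. smult ((-1)^card (R-T) * (\<Prod>y\<in>R-T. w1 y)) ([:0,1:]^card T))"
proof -
  have "(\<Prod>v\<in>R. L v) = (\<Prod>v\<in>R. [:0,1:] + [:-w1 v:])"
    unfolding L_def by (intro prod.cong) auto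
  also have "\<dots> = (\<Sum>T\<in>Pow R. (\<Prod>x\<in>T. [:0,1:]) * (\<Prod>x\<in>R-T. [:-w1 x:]))"
    by (rule prod_add[OF assms])
  also have "\<dots> = (\<Sum>T\<in>Pow R. smult ((-1)^card (R-T) * (\<Prod>y\<in>R-T. w1 y)) ([:0,1:]^card T))"
  proof (intro sum.cong refl)
    fix T assume "T \<in> Pow R"
    have "(\<Prod>x\<in>R-T. [:-w1 x:]) = [:\<Prod>x\<in>R-T. - w1 x:]"
      by (rule prod_const_poly)
    then show "(\<Prod>x\<in>T. [:0,1:]) * (\<Prod>x\<in>R-T. [:-w1 x:]) = smult ((-1)^card (R-T) * (\<Prod>y\<in>R-T. w1 y)) ([:0,1:]^card T)"
      by (simp add: prod_uminus mult.commute)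
  qed
  finally show ?thesis .
qed

lemma eta_eq:
  assumes S: "finite S"
  shows "eta S E w w1 = g S"
proof -
  define s where "s T = (-1) ^ card (S - T) * (\<Prod>y\<in>S - T. w1 y)" for T
  define MS where "MS = matchings (induced_edges E S)"
  have "eta S E w w1 = (\<Sum>T\<in>Pow S. \<Sum>M\<in>{M\<in>MS. \<Union>M \<subseteq> T}.
           smult (s T * cM M) ([:0,1:]^(card T - 2*card M)))"
    unfolding eta_def mu_w_def
  proof (intro sum.cong refl)
    fix T assume T: "T \<in> Pow S"
    show "smult ((-1) ^ card (S - T) * (\<Prod>y\<in>S - T. w1 y))
          (\<Sum>M\<in>matchings (induced_edges E T).
              monom ((-1) ^ card M * (cmod (\<Prod>e\<in>M. w e))\<^sup>2) (card T - 2 * card M)) =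
          (\<Sum>M\<in>{M \<in> MS. \<Union>M \<subseteq> T}. smult (s T * cM M) ([:0, 1:] ^ (card T - 2 * card M)))"
    proof -
      have "matchings (induced_edges E T) = {M\<in>MS. \<Union>M \<subseteq> T}" using T matchings_sub MS_def by auto
      then show ?thesis unfolding smult_sum_r monom_altdef smult_smult s_def cM_def by simp
    qed
  qed
  also have "\<dots> = (\<Sum>M\<in>MS. \<Sum>T\<in>{T\<in>Pow S. \<Union>M \<subseteq> T}.
           smult (s T * cM M) ([:0,1:]^(card T - 2*card M)))"
    using fin_match[OF S] S unfolding MS_def by (intro sum.swap_restrict) simp_all
  also have "\<dots> = (\<Sum>M\<in>MS. smult (cM M) (\<Prod>v\<in>S - \<Union>M. L v))"
  proof (intro sum.cong refl)
    fix M assume M: "M \<in> MS"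
    define U where "U = \<Union>M"
    define R where "R = S - U"
    have US: "U \<subseteq> S" using M match_Union_sub unfolding U_def MS_def by blast
    have finR: "finite R" "finite U" using S US R_def finite_subset by auto
    have cU: "card U = 2 * card M" using card_Union_match M unfolding U_def MS_def by blast
    have img: "{T\<in>Pow S. U \<subseteq> T} = (\<lambda>X. U \<union> X) ` Pow R"
    proof
      show "{T\<in>Pow S. U \<subseteq> T} \<subseteq> (\<lambda>X. U \<union> X) ` Pow R"
      proof
        fix T assume "T \<in> {T\<in>Pow S. U \<subseteq> T}"
        then have "T = U \<union> (T - U)" "T - U \<in> Pow R" by (auto simp: R_def)
        then show "T \<in> (\<lambda>X. U \<union> X) ` Pow R" by blast
      qed
      show "(\<lambda>X. U \<union> X) ` Pow R \<subseteq> {T\<in>Pow S. U \<subseteq> T}" using US by (auto simp: R_def)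
    qed
    have inj: "inj_on (\<lambda>X. U \<union> X) (Pow R)"
      unfolding R_def inj_on_def by auto
    have "(\<Sum>T\<in>{T\<in>Pow S. U \<subseteq> T}. smult (s T * cM M) ([:0,1:]^(card T - 2*card M)))
       = (\<Sum>X\<in>Pow R. smult (s (U \<union> X) * cM M) ([:0,1:]^(card (U \<union> X) - 2*card M)))"
      unfolding img by (subst sum.reindex[OF inj]) simp
    also have "\<dots> = (\<Sum>X\<in>Pow R. smult (cM M) (smult ((-1)^card (R-X) * (\<Prod>y\<in>R-X. w1 y)) ([:0,1:]^card X)))"
    proof (intro sum.cong refl)
      fix X assume X: "X \<in> Pow R"
      have e1: "S - (U \<union> X) = R - X" unfolding R_def by auto
      have e2: "card (U \<union> X) = card U + card X"
        using X finR unfolding R_def by (intro card_Un_disjoint) (auto intro: finite_subset)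
      have e3: "s (U \<union> X) = (-1)^card (R-X) * (\<Prod>y\<in>R-X. w1 y)" unfolding s_def e1 ..
      have e4: "card (U \<union> X) - 2*card M = card X" unfolding e2 cU by simp
      have "True \<Longrightarrow> True" by simp
      moreover have "card (U \<union> X) = card U + card X"
        using X finR unfolding R_def by (intro card_Un_disjoint) (auto intro: finite_subset)
      ultimately show "smult (s (U \<union> X) * cM M) ([:0,1:]^(card (U \<union> X) - 2*card M)) =
          smult (cM M) (smult ((-1)^card (R-X) * (\<Prod>y\<in>R-X. w1 y)) ([:0,1:]^card X))"
        unfolding e3 e4 smult_smult by (simp only: mult.commute)
    qed
    also have "\<dots> = smult (cM M) (\<Prod>v\<in>R. L v)"
      by (simp add: expand[OF finR(1)] smult_sum_r)
    finally show "(\<Sum>T\<in>{T\<in>Pow S. \<Union>M \<subseteq> T}. smult (s T * cM M) ([:0,1:]^(card T - 2*card M)))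
        = smult (cM M) (\<Prod>v\<in>S - \<Union>M. L v)" unfolding U_def R_def .
  qed
  finally show ?thesis unfolding g_def MS_def .
qed

lemma pderiv_prodL: "pderiv (\<Prod>v\<in>A. L v) = (\<Sum>v\<in>A. \<Prod>x\<in>A - {v}. L x)"
  unfolding pderiv_prod by (simp add: L_def pderiv_pCons)

lemma g_deriv:
  assumes S: "finite S"
  shows "pderiv (g S) = (\<Sum>v\<in>S. g (S - {v}))"
proof -
  define MS where "MS = matchings (induced_edges E S)"
  have "pderiv (g S) = (\<Sum>M\<in>MS. \<Sum>v\<in>{v. v \<in> S \<and> v \<notin> \<Union>M}. smult (cM M) (\<Prod>x\<in>(S - {v}) - \<Union>M. L x))"
    unfolding g_def MS_def pderiv_sum' pderiv_smult pderiv_prodL smult_sum_r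
  proof (rule sum.cong[OF refl])
    fix M
    have "S - \<Union>M = {v. v \<in> S \<and> v \<notin> \<Union>M}" by auto
    moreover have "\<And>v. S - \<Union>M - {v} = (S - {v}) - \<Union>M" by auto
    ultimately show "(\<Sum>v\<in>S - \<Union>M. smult (cM M) (\<Prod>x\<in>S - \<Union>M - {v}. L x)) =
         (\<Sum>v\<in>{v. v \<in> S \<and> v \<notin> \<Union>M}. smult (cM M) (\<Prod>x\<in>S - {v} - \<Union>M. L x))"
      by simp
  qed
  also have "\<dots> = (\<Sum>v\<in>S. \<Sum>M\<in>{M. M \<in> MS \<and> v \<notin> \<Union>M}. smult (cM M) (\<Prod>x\<in>(S - {v}) - \<Union>M. L x))"
    using fin_match[OF S] S unfolding MS_def by (intro sum.swap_restrict) simp_all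
  also have "\<dots> = (\<Sum>v\<in>S. g (S - {v}))"
    unfolding g_def
  proof (rule sum.cong[OF refl])
    fix v assume "v \<in> S"
    have "matchings (induced_edges E (S - {v})) = {M. M \<in> MS \<and> v \<notin> \<Union>M}"
      unfolding MS_def using matchings_sub[of "S - {v}" S] match_Union_sub[of _ S] by auto
    then show "(\<Sum>M\<in>{M. M \<in> MS \<and> v \<notin> \<Union>M}. smult (cM M) (\<Prod>x\<in>(S - {v}) - \<Union>M. L x)) =
       (\<Sum>M\<in>matchings (induced_edges E (S - {v})). smult (cM M) (\<Prod>x\<in>(S - {v}) - \<Union>M. L x))"
      by simp
  qed
  finally show ?thesis .
qed

lemma edge_at:
  assumes "e \<in> E" "u \<in> e"
  obtains v where "e = {u,v}" "v \<noteq> u"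
proof -
  obtain a b where "a \<noteq> b" "e = {a,b}" using edges assms(1) by blast
  then show ?thesis using that assms(2) by (metis empty_iff insert_commute insert_iff)
qed

lemma match_insert:
  assumes M': "M' \<in> matchings (induced_edges E (S - {u,v}))" and e: "{u,v} \<in> E" "{u,v} \<subseteq> S"
  shows "insert {u,v} M' \<in> matchings (induced_edges E S)" "{u,v} \<notin> M'"
proof -
  have sub: "\<And>f. f \<in> M' \<Longrightarrow> f \<in> E \<and> f \<subseteq> S - {u,v}"
    using M' unfolding matchings_def induced_edges_def by auto
  have dis: "\<And>f f'. f \<in> M' \<Longrightarrow> f' \<in> M' \<Longrightarrow> f \<noteq> f' \<Longrightarrow> f \<inter> f' = {}"
    using M' unfolding matchings_def by auto
  show "{u,v} \<notin> M'" using sub by blast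
  show "insert {u,v} M' \<in> matchings (induced_edges E S)"
    unfolding matchings_def induced_edges_def
  proof (intro CollectI conjI ballI impI)
    show "insert {u, v} M' \<subseteq> {e \<in> E. e \<subseteq> S}" using sub e by auto
    fix f f' assume "f \<in> insert {u, v} M'" "f' \<in> insert {u, v} M'" "f \<noteq> f'"
    then show "f \<inter> f' = {}" using sub dis by blast
  qed
qed

lemma match_split:
  assumes M: "M \<in> matchings (induced_edges E S)" and u: "u \<in> \<Union>M"
  shows "\<exists>v. v \<in> S - {u} \<and> {u,v} \<in> E \<and> M - {{u,v}} \<in> matchings (induced_edges E (S - {u,v}))
      \<and> M = insert {u,v} (M - {{u,v}})"
proof -
  obtain e where e: "e \<in> M" "u \<in> e" using u by blast
  have eE: "e \<in> E" "e \<subseteq> S" using M e unfolding matchings_def induced_edges_def by auto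
  obtain v where v: "e = {u,v}" "v \<noteq> u" using edge_at eE(1) e(2) by blast
  have sub: "\<And>f. f \<in> M \<Longrightarrow> f \<in> E \<and> f \<subseteq> S"
    using M unfolding matchings_def induced_edges_def by auto
  have dis: "\<And>f f'. f \<in> M \<Longrightarrow> f' \<in> M \<Longrightarrow> f \<noteq> f' \<Longrightarrow> f \<inter> f' = {}"
    using M unfolding matchings_def by auto
  have "M - {e} \<in> matchings (induced_edges E (S - {u,v}))"
    unfolding matchings_def induced_edges_def
  proof (intro CollectI conjI ballI impI)
    show "M - {e} \<subseteq> {f \<in> E. f \<subseteq> S - {u, v}}"
    proof
      fix f assume f: "f \<in> M - {e}"
      then have "f \<inter> e = {}" using dis e(1) by blast
      then show "f \<in> {f \<in> E. f \<subseteq> S - {u, v}}" using sub f v(1) by auto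
    qed
    fix f f' assume "f \<in> M - {e}" "f' \<in> M - {e}" "f \<noteq> f'"
    then show "f \<inter> f' = {}" using dis by blast
  qed
  moreover have "v \<in> S - {u}" using eE v by auto
  ultimately show ?thesis using v eE e by (intro exI[of _ v]) auto
qed

lemma g_rec:
  assumes S: "finite S" and u: "u \<in> S"
  shows "g S = L u * g (S - {u}) - (\<Sum>v\<in>{v\<in>S - {u}. {u,v} \<in> E}. smult (cw u v) (g (S - {u,v})))"
proof -
  define MS where "MS = matchings (induced_edges E S)"
  define N where "N = {v\<in>S - {u}. {u,v} \<in> E}"
  define tm where "tm T M = smult (cM M) (\<Prod>x\<in>T - \<Union>M. L x)" for T M
  define A where "A = {M\<in>MS. u \<notin> \<Union>M}"
  define B where "B = {M\<in>MS. u \<in> \<Union>M}"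
  have finMS: "finite MS" using fin_match[OF S] MS_def by simp
  have "g S = sum (tm S) MS" unfolding g_def tm_def MS_def ..
  also have "MS = A \<union> B" unfolding A_def B_def by auto
  also have "sum (tm S) (A \<union> B) = sum (tm S) A + sum (tm S) B"
    using finMS by (intro sum.union_disjoint) (auto simp: A_def B_def)
  also have "sum (tm S) A = L u * g (S - {u})"
  proof -
    have AM: "A = matchings (induced_edges E (S - {u}))"
      unfolding A_def MS_def using matchings_sub[of "S - {u}" S] match_Union_sub[of _ S] by auto
    have "sum (tm S) A = (\<Sum>M\<in>A. L u * tm (S - {u}) M)"
    proof (rule sum.cong[OF refl])
      fix M assume "M \<in> A"
      then have "u \<notin> \<Union>M" unfolding A_def by auto
      then have "S - \<Union>M = insert u ((S - {u}) - \<Union>M)" using u by auto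
      then have "(\<Prod>x\<in>S - \<Union>M. L x) = L u * (\<Prod>x\<in>(S - {u}) - \<Union>M. L x)"
        using S by (simp add: prod.insert)
      then show "tm S M = L u * tm (S - {u}) M" unfolding tm_def by (simp add: mult_smult_right)
    qed
    also have "\<dots> = L u * g (S - {u})" unfolding g_def AM tm_def by (simp add: sum_distrib_left)
    finally show ?thesis .
  qed
  also have "sum (tm S) B = - (\<Sum>v\<in>N. smult (cw u v) (g (S - {u,v})))"
  proof -
    define Sig where "Sig = Sigma N (\<lambda>v. matchings (induced_edges E (S - {u,v})))"
    define h where "h = (\<lambda>(v, M'). insert {u,v} M')"
    have finN: "finite N" using S N_def by auto
    have Bimg: "B = h ` Sig"
    proof
      show "B \<subseteq> h ` Sig"
      proof
        fix M assume "M \<in> B"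
        then have "M \<in> MS" "u \<in> \<Union>M" unfolding B_def by auto
        then obtain v where v: "v \<in> S - {u}" "{u,v} \<in> E"
          "M - {{u,v}} \<in> matchings (induced_edges E (S - {u,v}))" "M = insert {u,v} (M - {{u,v}})"
          using match_split unfolding MS_def by blast
        then have "(v, M - {{u,v}}) \<in> Sig" unfolding Sig_def N_def by auto
        then show "M \<in> h ` Sig" using v(4) unfolding h_def by (metis (no_types, lifting) case_prod_conv image_eqI)
      qed
      show "h ` Sig \<subseteq> B"
      proof
        fix M assume "M \<in> h ` Sig"
        then obtain v M' where vM: "v \<in> N" "M' \<in> matchings (induced_edges E (S - {u,v}))" "M = insert {u,v} M'"
          unfolding Sig_def h_def by auto
        then have "{u,v} \<in> E" "{u,v} \<subseteq> S" using u unfolding N_def by auto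
        then have "M \<in> MS" using match_insert vM unfolding MS_def by auto
        then show "M \<in> B" unfolding B_def vM(3) by auto
      qed
    qed
    have inj: "inj_on h Sig"
    proof (rule inj_onI)
      fix x y assume x: "x \<in> Sig" and y: "y \<in> Sig" and hxy: "h x = h y"
      obtain v M' where xv: "x = (v, M')" "v \<in> N" "M' \<in> matchings (induced_edges E (S - {u,v}))"
        using x unfolding Sig_def by auto
      obtain v' M'' where yv: "y = (v', M'')" "v' \<in> N" "M'' \<in> matchings (induced_edges E (S - {u,v'}))"
        using y unfolding Sig_def by auto
      have nu1: "\<And>f. f \<in> M' \<Longrightarrow> u \<notin> f" using xv(3) unfolding matchings_def induced_edges_def by auto
      have nu2: "\<And>f. f \<in> M'' \<Longrightarrow> u \<notin> f" using yv(3) unfolding matchings_def induced_edges_def by auto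
      have eq: "insert {u,v} M' = insert {u,v'} M''" using hxy xv yv unfolding h_def by simp
      then have "{u,v} \<in> insert {u,v'} M''" by blast
      then have "{u,v} = {u,v'}" using nu2 by blast
      then have vv: "v = v'" by (metis doubleton_eq_iff)
      have "{u,v} \<notin> M'" "{u,v} \<notin> M''" using nu1 nu2 by blast+
      then have "M' = M''" using eq vv by (metis insert_ident)
      then show "x = y" using xv yv vv by simp
    qed
    have tmh: "tm S (h (v, M')) = - smult (cw u v) (tm (S - {u,v}) M')"
      if vM: "(v, M') \<in> Sig" for v M'
    proof -
      have v: "v \<in> N" and M': "M' \<in> matchings (induced_edges E (S - {u,v}))" using vM unfolding Sig_def by auto
      have e: "{u,v} \<in> E" "{u,v} \<subseteq> S" using v u unfolding N_def by auto
      have nin: "{u,v} \<notin> M'" using match_insert[OF M' e] by simp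
      have "M' \<subseteq> Pow S" using M' unfolding matchings_def induced_edges_def by auto
      then have finM': "finite M'" using S by (meson finite_Pow_iff finite_subset)
      have c: "cM (insert {u,v} M') = - cw u v * cM M'"
        unfolding cM_def cw_def using nin finM' by (simp add: norm_mult power_mult_distrib)
      have d: "S - \<Union>(insert {u,v} M') = (S - {u,v}) - \<Union>M'" by auto
      show ?thesis unfolding h_def tm_def using c d by (simp add: smult_smult)
    qed
    have "sum (tm S) B = sum (tm S \<circ> h) Sig" unfolding Bimg by (rule sum.reindex[OF inj])
    also have "\<dots> = (\<Sum>(v,M')\<in>Sig. - smult (cw u v) (tm (S - {u,v}) M'))"
      by (rule sum.cong[OF refl]) (use tmh in auto)
    also have "\<dots> = (\<Sum>v\<in>N. \<Sum>M'\<in>matchings (induced_edges E (S - {u,v})). - smult (cw u v) (tm (S - {u,v}) M'))"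
      unfolding Sig_def by (rule sum.Sigma[symmetric]) (use finN S fin_match in auto)
    also have "\<dots> = - (\<Sum>v\<in>N. smult (cw u v) (g (S - {u,v})))"
      unfolding g_def tm_def by (simp add: sum_negf smult_sum_r)
    finally show ?thesis .
  qed
  finally show ?thesis unfolding N_def by simp
qed



lemma ring_aux: "(a::'b::comm_ring) * (l * b - X) - (l * a - (Y + Z)) * b = Y * b + (Z * b - a * X)"
  by (simp add: algebra_simps)

lemma HL:
  assumes "finite S" "u \<in> S" "v \<in> S" "u \<noteq> v"
  shows "\<exists>F. (\<forall>x\<in>set F. 0 \<le> fst x) \<and>
     g (S - {u}) * g (S - {v}) - g S * g (S - {u,v}) = SOS F \<and>
     (\<forall>P. is_path S E P \<longrightarrow> hd P = u \<longrightarrow> last P = v \<longrightarrow> (pw w P, g (S - set P)) \<in> set F)"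
  using assms
proof (induction "card S" arbitrary: S u v rule: less_induct)
  case less
  note S = less.prems
  define T where "T = S - {u}"
  define N where "N = {i\<in>S - {u,v}. {u,i} \<in> E}"
  define Q where "Q i G \<longleftrightarrow> (\<forall>x\<in>set G. 0 \<le> fst x) \<and>
     g (T - {i}) * g (T - {v}) - g T * g (T - {i,v}) = SOS G \<and>
     (\<forall>P. is_path T E P \<longrightarrow> hd P = i \<longrightarrow> last P = v \<longrightarrow> (pw w P, g (T - set P)) \<in> set G)" for i G
  have "card S > 0" using S card_gt_0_iff by blast
  then have finT: "finite T" "card T < card S" using S unfolding T_def by auto
  have "\<forall>i\<in>N. \<exists>G. Q i G"
  proof
    fix i assume i: "i \<in> N"
    have "i \<in> T" "v \<in> T" "i \<noteq> v" using i S unfolding N_def T_def by auto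
    then show "\<exists>G. Q i G" unfolding Q_def using less.hyps[OF finT(2) finT(1)] by blast
  qed
  then obtain FF where FF: "\<forall>i\<in>N. Q i (FF i)" by metis
  have finN: "finite N" using S unfolding N_def by auto
  obtain xs where xs: "set xs = N" "distinct xs" using finite_distinct_list[OF finN] by blast
  define sc where "sc (k::real) (G::(real \<times> real poly) list) = map (\<lambda>(c,q). (k*c, q)) G" for k G
  define F0 where "F0 = (if {u,v} \<in> E then [(cw u v, g (S - {u,v}))] else [])"
  define F where "F = F0 @ concat (map (\<lambda>i. sc (cw u i) (FF i)) xs)"
  have cw0: "0 \<le> cw a b" for a b unfolding cw_def by simp
  have nonneg: "\<forall>x\<in>set F. 0 \<le> fst x"
  proof
    fix x assume "x \<in> set F"
    then consider "x \<in> set F0" | i where "i \<in> N" "x \<in> set (sc (cw u i) (FF i))"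
      unfolding F_def using xs by auto
    then show "0 \<le> fst x"
    proof cases
      case 1 then show ?thesis using cw0 unfolding F0_def by (auto split: if_splits)
    next
      case (2 i)
      then obtain c q where "(c,q) \<in> set (FF i)" "x = (cw u i * c, q)" unfolding sc_def by auto
      moreover have "0 \<le> c" using FF 2(1) calculation(1) unfolding Q_def by force
      ultimately show ?thesis using cw0 by simp
    qed
  qed
  define a where "a = g T"
  define b where "b = g (T - {v})"
  define X where "X = (\<Sum>i\<in>N. smult (cw u i) (g (T - {i,v})))"
  define Y where "Y = (if {u,v} \<in> E then smult (cw u v) b else 0)"
  define Z where "Z = (\<Sum>i\<in>N. smult (cw u i) (g (T - {i})))"
  have r1: "g S = L u * a - (Y + Z)"
  proof -
    have "g S = L u * g (S - {u}) - (\<Sum>i\<in>{i\<in>S - {u}. {u,i} \<in> E}. smult (cw u i) (g (S - {u,i})))"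
      using g_rec S by blast
    also have "(\<Sum>i\<in>{i\<in>S - {u}. {u,i} \<in> E}. smult (cw u i) (g (S - {u,i}))) = Y + Z"
    proof (cases "{u,v} \<in> E")
      case True
      then have e: "{i\<in>S - {u}. {u,i} \<in> E} = insert v N" "v \<notin> N" using S unfolding N_def by auto
      show ?thesis unfolding e(1) using e(2) finN True
        by (simp add: Y_def Z_def b_def T_def insert_commute Diff_insert2[symmetric])
    next
      case False
      then have e: "{i\<in>S - {u}. {u,i} \<in> E} = N" using S unfolding N_def by auto
      show ?thesis unfolding e using False
        by (simp add: Y_def Z_def T_def Diff_insert2[symmetric])
    qed
    finally show ?thesis unfolding a_def T_def .
  qed
  have r2: "g (S - {v}) = L u * b - X"
  proof -
    have uS: "u \<in> S - {v}" "finite (S - {v})" using S by auto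
    have "g (S - {v}) = L u * g (S - {v} - {u}) - (\<Sum>i\<in>{i\<in>S - {v} - {u}. {u,i} \<in> E}. smult (cw u i) (g (S - {v} - {u,i})))"
      using g_rec[OF uS(2) uS(1)] .
    also have "{i\<in>S - {v} - {u}. {u,i} \<in> E} = N" unfolding N_def by auto
    also have "S - {v} - {u} = T - {v}" unfolding T_def by auto
    also have "(\<Sum>i\<in>N. smult (cw u i) (g (S - {v} - {u,i}))) = X"
      unfolding X_def by (rule sum.cong[OF refl]) (simp add: T_def insert_commute Diff_insert2[symmetric])
    finally show ?thesis unfolding b_def .
  qed
  have sub: "g (S - {u,v}) = b" unfolding b_def T_def by (simp add: Diff_insert2[symmetric])
  have "g (S - {u}) * g (S - {v}) - g S * g (S - {u,v}) = Y * b + (Z * b - a * X)"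
    unfolding r1 r2 sub by (fold a_def T_def) (unfold a_def, rule ring_aux)
  also have "\<dots> = SOS F"
  proof -
    have "SOS F = SOS F0 + (\<Sum>i\<in>N. smult (cw u i) (SOS (FF i)))"
      unfolding F_def SOS_append SOS_concat map_map using xs
      by (simp add: sum_list_distinct_conv_sum_set sc_def SOS_sc o_def)
    also have "SOS F0 = Y * b" unfolding F0_def Y_def sub
      by (simp add: SOS_Nil SOS_single power2_eq_square)
    also have "(\<Sum>i\<in>N. smult (cw u i) (SOS (FF i))) =
        (\<Sum>i\<in>N. smult (cw u i) (g (T - {i}) * b - a * g (T - {i,v})))"
      using FF unfolding Q_def a_def b_def by (intro sum.cong refl) auto
    also have "\<dots> = Z * b - a * X"
      unfolding Z_def X_def
      by (simp add: sum_distrib_left sum_distrib_right sum_subtractf smult_diff_right mult_smult_right)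
    finally show ?thesis by simp
  qed
  finally have ident: "g (S - {u}) * g (S - {v}) - g S * g (S - {u,v}) = SOS F" .
  have paths: "\<forall>P. is_path S E P \<longrightarrow> hd P = u \<longrightarrow> last P = v \<longrightarrow> (pw w P, g (S - set P)) \<in> set F"
  proof (intro allI impI)
    fix P assume P: "is_path S E P" "hd P = u" "last P = v"
    obtain P' where P': "P = u # P'" using P(1,2) unfolding is_path_def by (cases P) auto
    have P'ne: "P' \<noteq> []" using P' P(3) S(4) by auto
    have "is_path S E (u # P')" using P(1) P' by simp
    then have tl: "is_path T E P'" "{u, hd P'} \<in> E" using path_tl[OF _ P'ne] unfolding T_def by auto
    obtain i r where ir: "P' = i # r" using P'ne by (cases P') auto
    have pwP: "pw w P = cw u i * pw w P'" unfolding P' ir cw_def by simp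
    have setP: "S - set P = T - set P'" unfolding P' T_def by auto
    have lastP': "last P' = v" using P(3) P' P'ne by simp
    show "(pw w P, g (S - set P)) \<in> set F"
    proof (cases "i = v")
      case True
      have "distinct P'" using tl(1) unfolding is_path_def by simp
      moreover have "hd P' = last P'" using ir lastP' True by simp
      ultimately have "P' = [hd P']" using distinct_hd_last[of P'] ir by blast
      then have "P' = [v]" using ir True by (metis list.sel(1))
      then have "pw w P = cw u v" "S - set P = S - {u,v}" using pwP P' True by auto
      moreover have "{u,v} \<in> E" using tl(2) ir True by simp
      ultimately show ?thesis unfolding F_def F0_def by simp
    next
      case False
      have "i \<in> set P'" by (simp add: ir)
      then have "i \<in> T" using tl(1) unfolding is_path_def by blast
      moreover have "{u,i} \<in> E" using tl(2) ir by simp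
      ultimately have iN: "i \<in> N" using False unfolding N_def T_def by blast
      have hdP': "hd P' = i" by (simp add: ir)
      have "Q i (FF i)" using FF iN by blast
      then have "(pw w P', g (T - set P')) \<in> set (FF i)"
        using tl(1) lastP' hdP' unfolding Q_def by blast
      then have "(pw w P, g (S - set P)) \<in> set (sc (cw u i) (FF i))"
        unfolding sc_def pwP setP by force
      then show ?thesis unfolding F_def set_append set_concat set_map using xs iN by blast
    qed
  qed
  show ?case using nonneg ident paths by (intro exI[of _ F] conjI) assumption+
qed

lemma g_empty: "g {} = 1"
proof -
  have "e \<notin> E" if "e \<subseteq> {}" for e
  proof
    assume "e \<in> E"
    then obtain a b where "e = {a,b}" using edges by blast
    then show False using that by simp
  qed
  then have i: "induced_edges E {} = {}" unfolding induced_edges_def by blast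
  have m: "matchings {} = {{}}" unfolding matchings_def by auto
  show ?thesis unfolding g_def cM_def i m by simp
qed

lemma g_deg: "finite S \<Longrightarrow> degree (g S) \<le> card S \<and> coeff (g S) (card S) = 1"
proof (induction "card S" arbitrary: S rule: less_induct)
  case less
  show ?case
  proof (cases "S = {}")
    case True then show ?thesis by (simp add: g_empty)
  next
    case False
    then obtain u where u: "u \<in> S" by blast
    define n where "n = card S - 1"
    have "card S > 0" using u less.prems card_gt_0_iff by blast
    then have cS: "card S = Suc n" by (simp add: n_def)
    have cT: "card (S - {u}) = n" using cS u less.prems by simp
    have "card (S - {u}) < card S" using cT cS by simp
    then have "degree (g (S - {u})) \<le> card (S - {u}) \<and> coeff (g (S - {u})) (card (S - {u})) = 1"
      using less.hyps less.prems by blast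
    then have IH: "degree (g (S - {u})) \<le> n" "coeff (g (S - {u})) n = 1" using cT by simp_all
    define N where "N = {v\<in>S - {u}. {u,v} \<in> E}"
    define Z where "Z = (\<Sum>v\<in>N. smult (cw u v) (g (S - {u,v})))"
    have rec: "g S = L u * g (S - {u}) - Z" unfolding Z_def N_def using g_rec less.prems u by blast
    have dZ: "degree Z \<le> n - 1"
      unfolding Z_def
    proof (rule degree_sum_le)
      show "finite N" using less.prems N_def by auto
      fix v assume v: "v \<in> N"
      then have sub: "{u,v} \<subseteq> S" "card {u,v} = 2" using u unfolding N_def by auto
      then have c: "card (S - {u,v}) = n - 1" using cS card_Diff_subset[OF _ sub(1)] by simp
      then have "card (S - {u,v}) < card S" using cS by simp
      then have "degree (g (S - {u,v})) \<le> card (S - {u,v})"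
        using less.hyps less.prems by blast
      then have "degree (g (S - {u,v})) \<le> n - 1" using c by simp
      then show "degree (smult (cw u v) (g (S - {u,v}))) \<le> n - 1"
        using degree_smult_le order_trans by blast
    qed
    have LS: "L u * g (S - {u}) = smult (- w1 u) (g (S - {u})) + pCons 0 (g (S - {u}))"
      unfolding L_def by simp
    have d1: "degree (L u * g (S - {u})) \<le> Suc n"
      unfolding LS using IH(1)
      by (intro degree_add_le) (use IH(1) degree_smult_le[of "-w1 u" "g(S-{u})"] degree_pCons_le[of 0 "g(S-{u})"] in linarith)+
    have c1: "coeff (L u * g (S - {u})) (Suc n) = 1"
      unfolding LS using IH by (simp add: coeff_eq_0)
    have cZ: "coeff Z (Suc n) = 0" using dZ by (simp add: coeff_eq_0)
    have "degree (g S) \<le> Suc n" unfolding rec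
      by (rule degree_diff_le[OF d1]) (use dZ in linarith)
    moreover have "coeff (g S) (Suc n) = 1" unfolding rec using c1 cZ by simp
    ultimately show ?thesis using cS by simp
  qed
qed

lemma g_nz: "finite S \<Longrightarrow> g S \<noteq> 0"
  using g_deg[of S] by auto

lemma ring_aux2: "(a::'b::comm_ring) * (a + X) - G * Y = a * a + (a * X - G * Y)"
  by (simp add: algebra_simps)

lemma Dlemma:
  assumes S: "finite S" and u: "u \<in> S"
  shows "\<exists>F. (\<forall>x\<in>set F. 0 \<le> fst x) \<and>
     g (S - {u}) * pderiv (g S) - g S * pderiv (g (S - {u})) = SOS F \<and>
     (1, g (S - {u})) \<in> set F \<and>
     (\<forall>P. is_path S E P \<longrightarrow> hd P = u \<longrightarrow> 2 \<le> length P \<longrightarrow> (pw w P, g (S - set P)) \<in> set F)"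
proof -
  define Q where "Q v G \<longleftrightarrow> (\<forall>x\<in>set G. 0 \<le> fst x) \<and>
     g (S - {u}) * g (S - {v}) - g S * g (S - {u,v}) = SOS G \<and>
     (\<forall>P. is_path S E P \<longrightarrow> hd P = u \<longrightarrow> last P = v \<longrightarrow> (pw w P, g (S - set P)) \<in> set G)" for v G
  have "\<forall>v\<in>S - {u}. \<exists>G. Q v G"
  proof
    fix v assume v: "v \<in> S - {u}"
    show "\<exists>G. Q v G" unfolding Q_def by (rule HL[OF S u]) (use v in auto)
  qed
  then obtain FF where FF: "\<forall>v\<in>S - {u}. Q v (FF v)" by metis
  obtain ys where ys: "set ys = S - {u}" "distinct ys" using finite_distinct_list[of "S - {u}"] S by auto
  define F where "F = (1, g (S - {u})) # concat (map FF ys)"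
  have nonneg: "\<forall>x\<in>set F. 0 \<le> fst x"
    unfolding F_def using FF ys unfolding Q_def by auto
  have d1: "pderiv (g S) = g (S - {u}) + (\<Sum>v\<in>S - {u}. g (S - {v}))"
    unfolding g_deriv[OF S] by (rule sum.remove[OF S u])
  have d2: "pderiv (g (S - {u})) = (\<Sum>v\<in>S - {u}. g (S - {u,v}))"
  proof -
    have "finite (S - {u})" using S by simp
    then have "pderiv (g (S - {u})) = (\<Sum>v\<in>S - {u}. g (S - {u} - {v}))" by (rule g_deriv)
    also have "\<dots> = (\<Sum>v\<in>S - {u}. g (S - {u,v}))"
      by (rule sum.cong[OF refl]) (metis Diff_insert2)
    finally show ?thesis .
  qed
  have "g (S - {u}) * pderiv (g S) - g S * pderiv (g (S - {u})) =
      g (S - {u}) * g (S - {u}) + ((\<Sum>v\<in>S - {u}. g (S - {u}) * g (S - {v})) - (\<Sum>v\<in>S - {u}. g S * g (S - {u,v})))"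
    unfolding d1 d2 by (subst ring_aux2) (simp only: sum_distrib_left)
  also have "\<dots> = g (S - {u}) * g (S - {u}) + (\<Sum>v\<in>S - {u}. g (S - {u}) * g (S - {v}) - g S * g (S - {u,v}))"
    by (simp only: sum_subtractf)
  also have "\<dots> = g (S - {u}) * g (S - {u}) + (\<Sum>v\<in>S - {u}. SOS (FF v))"
  proof -
    have "(\<Sum>v\<in>S - {u}. g (S - {u}) * g (S - {v}) - g S * g (S - {u,v})) = (\<Sum>v\<in>S - {u}. SOS (FF v))"
    proof (rule sum.cong[OF refl])
      fix v assume "v \<in> S - {u}"
      then have "Q v (FF v)" using FF by blast
      then show "g (S - {u}) * g (S - {v}) - g S * g (S - {u,v}) = SOS (FF v)" unfolding Q_def by blast
    qed
    then show ?thesis by simp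
  qed
  also have "\<dots> = SOS F"
  proof -
    have "F = [(1, g (S - {u}))] @ concat (map FF ys)" unfolding F_def by simp
    then have "SOS F = smult 1 (g (S - {u})^2) + sum_list (map (SOS \<circ> FF) ys)"
      by (simp only: SOS_append SOS_single SOS_concat map_map)
    also have "sum_list (map (SOS \<circ> FF) ys) = (\<Sum>v\<in>S - {u}. SOS (FF v))"
      using sum_list_distinct_conv_sum_set[OF ys(2), of "SOS \<circ> FF"] ys(1) by simp
    finally show ?thesis by (simp add: power2_eq_square)
  qed
  finally have ident: "g (S - {u}) * pderiv (g S) - g S * pderiv (g (S - {u})) = SOS F" .
  have paths: "\<forall>P. is_path S E P \<longrightarrow> hd P = u \<longrightarrow> 2 \<le> length P \<longrightarrow> (pw w P, g (S - set P)) \<in> set F"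
  proof (intro allI impI)
    fix P assume P: "is_path S E P" "hd P = u" "2 \<le> length P"
    obtain P' where P': "P = u # P'" using P(1,2) unfolding is_path_def by (cases P) auto
    have P'ne: "P' \<noteq> []" using P' P(3) by auto
    define v where "v = last P"
    have "v \<in> set P'" unfolding v_def P' using P'ne by simp
    moreover have "u \<notin> set P'" using P(1) unfolding P' is_path_def by simp
    moreover have "set P \<subseteq> S" using P(1) unfolding is_path_def by simp
    ultimately have vS: "v \<in> S - {u}" unfolding P' by auto
    then have "Q v (FF v)" using FF by blast
    then have "(pw w P, g (S - set P)) \<in> set (FF v)" using P(1,2) unfolding Q_def v_def by blast
    then show "(pw w P, g (S - set P)) \<in> set F" unfolding F_def using ys vS by auto
  qed
  have one: "(1, g (S - {u})) \<in> set F" unfolding F_def by simp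
  show ?thesis using nonneg ident one paths by (intro exI[of _ F] conjI) assumption+
qed

end

lemma poly_SOS: "poly (SOS G) t = sum_list (map (\<lambda>(c,q). c * (poly q t)^2) G)"
  unfolding SOS_def by (induction G) auto

lemma sos_dvd:
  fixes \<theta> :: real
  assumes nn: "\<forall>x\<in>set F. 0 \<le> fst x"
  shows "[:-\<theta>,1:]^(2*s - 1) dvd SOS F \<Longrightarrow> (c,q) \<in> set F \<Longrightarrow> c > 0 \<Longrightarrow> [:-\<theta>,1:]^s dvd q"
proof (induction s arbitrary: c q)
  case 0 then show ?case by simp
next
  case (Suc s)
  define p where "p = [:-\<theta>,1:]"
  have H: "p^(2*s) * p dvd SOS F" using Suc.prems(1) unfolding p_def by (simp add: power_Suc2)
  have "p^(2*s - 1) dvd SOS F" using power_le_dvd[OF Suc.prems(1)[folded p_def], of "2*s - 1"] by simp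
  then have IH: "\<And>c q. (c,q) \<in> set F \<Longrightarrow> c > 0 \<Longrightarrow> p^s dvd q" using Suc.IH unfolding p_def by blast
  define r where "r q = q div p^s" for q
  have pq: "q = p^s * r q" if "(c,q) \<in> set F" "c > 0" for c q
    using IH[OF that] unfolding r_def by simp
  have "SOS F = sum_list (map (\<lambda>x. p^(2*s) * (\<lambda>(c,q). smult c ((r q)^2)) x) F)"
    unfolding SOS_def
  proof (rule arg_cong[where f=sum_list], rule map_cong[OF refl])
    fix x assume x: "x \<in> set F"
    obtain c q where cq: "x = (c,q)" by (cases x)
    have "0 \<le> c" using nn x cq by auto
    then consider "c = 0" | "c > 0" by linarith
    then show "(\<lambda>(c,q). smult c (q^2)) x = p^(2*s) * (\<lambda>(c,q). smult c ((r q)^2)) x"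
    proof cases
      case 1 then show ?thesis using cq by simp
    next
      case 2
      then have "q = p^s * r q" using pq x cq by blast
      then have "q^2 = p^(2*s) * (r q)^2" by (metis power_mult power_mult_distrib mult.commute)
      then show ?thesis using cq by (simp add: mult_smult_right)
    qed
  qed
  also have "\<dots> = p^(2*s) * SOS (map (\<lambda>(c,q). (c, r q)) F)"
    unfolding SOS_def sum_list_const_mult map_map by (simp add: o_def case_prod_beta)
  finally have eq: "SOS F = p^(2*s) * SOS (map (\<lambda>(c,q). (c, r q)) F)" .
  have "p \<noteq> 0" unfolding p_def by simp
  then have "p dvd SOS (map (\<lambda>(c,q). (c, r q)) F)" using H unfolding eq
    by (simp add: dvd_mult_cancel_left)
  then have "poly (SOS (map (\<lambda>(c,q). (c, r q)) F)) \<theta> = 0" unfolding p_def by (simp add: poly_eq_0_iff_dvd)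
  then have z: "sum_list (map (\<lambda>(c,q). c * (poly (r q) \<theta>)^2) F) = 0"
    unfolding poly_SOS map_map by (simp add: o_def case_prod_beta split_def)
  have "\<forall>y\<in>set (map (\<lambda>(c,q). c * (poly (r q) \<theta>)^2) F). 0 \<le> y" using nn by auto
  then have "\<forall>y\<in>set (map (\<lambda>(c,q). c * (poly (r q) \<theta>)^2) F). y = 0"
    using z sum_list_nonneg_eq_0_iff by blast
  then have "c * (poly (r q) \<theta>)^2 = 0" using Suc.prems(2) by force
  then have "poly (r q) \<theta> = 0" using Suc.prems(3) by simp
  then have "p dvd r q" unfolding p_def by (simp add: poly_eq_0_iff_dvd)
  then have "p^s * p dvd p^s * r q" by simp
  then show ?case using pq[OF Suc.prems(2,3)] unfolding p_def by (simp add: power_Suc2)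
qed

lemma pd_dvd:
  fixes q :: "real poly"
  assumes "[:-\<theta>,1:]^(Suc n) dvd q"
  shows "[:-\<theta>,1:]^n dvd pderiv q"
proof -
  define p where "p = [:-\<theta>,1:]"
  obtain t where t: "q = p^(Suc n) * t" using assms unfolding p_def by (auto simp: dvd_def)
  have "pderiv q = p^n * (p * pderiv t + t * smult (of_nat (Suc n)) (pderiv p))"
    unfolding t pderiv_mult pderiv_power_Suc by (simp add: algebra_simps)
  then show ?thesis unfolding p_def by simp
qed

lemma eta_del: "eta (V - D) (del_edges E D) w w1 = eta (V - D) E w w1"
  unfolding eta_def
proof (rule sum.cong[OF refl])
  fix S assume "S \<in> Pow (V - D)"
  then have "induced_edges (del_edges E D) S = induced_edges E S"
    unfolding induced_edges_def del_edges_def by auto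
  then show "smult ((-1) ^ card (V - D - S) * (\<Prod>y\<in>V - D - S. w1 y)) (mu_w S (induced_edges (del_edges E D) S) w) =
     smult ((-1) ^ card (V - D - S) * (\<Prod>y\<in>V - D - S. w1 y)) (mu_w S (induced_edges E S) w)" by simp
qed


theorem corollary4p6:
  fixes V :: "'a set" and E :: "'a set set" and w :: "'a set \<Rightarrow> complex"
    and w1 :: "'a \<Rightarrow> real" and \<theta> :: real and ps :: "'a list"
  assumes "simple_graph V E"
    and "\<forall>e\<in>E. w e \<noteq> 0"
    and "is_path V E ps" and "length ps \<ge> 2"
  shows "int (mult \<theta> (del_verts V (set ps)) (del_edges E (set ps)) w w1)
           \<ge> int (mult \<theta> V E w w1) - 1"
proof -
  interpret wg E w w1
  proof
    fix e assume "e \<in> E"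
    then show "\<exists>a b. a \<noteq> b \<and> e = {a, b}" using assms(1) unfolding simple_graph_def by blast
  next
    fix e assume "e \<in> E" then show "w e \<noteq> 0" using assms(2) by blast
  qed
  have finV: "finite V" using assms(1) unfolding simple_graph_def by blast
  have psV: "ps \<noteq> []" "set ps \<subseteq> V" using assms(3) unfolding is_path_def by auto
  define u where "u = hd ps"
  have u: "u \<in> V" using psV unfolding u_def by auto
  define p where "p = [:-\<theta>,1:]"
  define m where "m = order \<theta> (g V)"
  define k where "k = order \<theta> (g (V - {u}))"
  define o2 where "o2 = order \<theta> (g (V - set ps))"
  have m_eq: "mult \<theta> V E w w1 = m" unfolding mult_def m_def eta_eq[OF finV] ..
  have o_eq: "mult \<theta> (del_verts V (set ps)) (del_edges E (set ps)) w w1 = o2"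
    unfolding mult_def o2_def del_verts_def eta_del using finV by (simp add: eta_eq)
  show ?thesis
  proof (cases "m = 0")
    case True then show ?thesis unfolding m_eq o_eq by simp
  next
    case False
    obtain F where F: "\<forall>x\<in>set F. 0 \<le> fst x"
      "g (V - {u}) * pderiv (g V) - g V * pderiv (g (V - {u})) = SOS F"
      "(1, g (V - {u})) \<in> set F"
      "\<forall>P. is_path V E P \<longrightarrow> hd P = u \<longrightarrow> 2 \<le> length P \<longrightarrow> (pw w P, g (V - set P)) \<in> set F"
      using Dlemma[OF finV u] by blast
    have dm: "p^m dvd g V" unfolding p_def m_def by (rule order_1)
    have dk: "p^k dvd g (V - {u})" unfolding p_def k_def by (rule order_1)
    have dm': "p^(m-1) dvd pderiv (g V)" using dm False pd_dvd unfolding p_def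
      by (metis Suc_pred' neq0_conv)
    have dk': "p^(k-1) dvd pderiv (g (V - {u}))"
    proof (cases "k = 0")
      case True then show ?thesis by simp
    next
      case False then show ?thesis using dk pd_dvd unfolding p_def by (metis Suc_pred' neq0_conv)
    qed
    have "p^(k + (m-1)) dvd g (V - {u}) * pderiv (g V)"
      unfolding power_add by (rule mult_dvd_mono[OF dk dm'])
    then have a1: "p^(m+k-1) dvd g (V - {u}) * pderiv (g V)" using False
      by (metis Nat.add_diff_assoc add.commute le_add1 not_gr_zero less_one not_less)
    have "p^(m + (k-1)) dvd g V * pderiv (g (V - {u}))"
      unfolding power_add by (rule mult_dvd_mono[OF dm dk'])
    then have a2: "p^(m+k-1) dvd g V * pderiv (g (V - {u}))"
      by (rule power_le_dvd) simp
    have "p^(m+k-1) dvd SOS F" unfolding F(2)[symmetric] using a1 a2 by (rule dvd_diff)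
    define s where "s = (m+k) div 2"
    have "p^(2*s - 1) dvd SOS F"
      by (rule power_le_dvd[OF \<open>p^(m+k-1) dvd SOS F\<close>]) (simp add: s_def)
    then have sd: "\<And>c q. (c,q) \<in> set F \<Longrightarrow> c > 0 \<Longrightarrow> p^s dvd q"
      using sos_dvd[OF F(1)] unfolding p_def by blast
    have pwpos: "pw w ps > 0"
      using pw_pos[of E w ps] assms(2,3) unfolding is_path_def by blast
    have "p^s dvd g (V - {u})" using sd[OF F(3)] by simp
    then have s1: "s \<le> k" unfolding p_def k_def order_divides using g_nz finV by auto
    have "(pw w ps, g (V - set ps)) \<in> set F" using F(4) assms(3,4) u_def by blast
    then have "p^s dvd g (V - set ps)" using sd pwpos by blast
    then have s2: "s \<le> o2" unfolding p_def o2_def order_divides using g_nz finV by auto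
    show ?thesis unfolding m_eq o_eq using s1 s2 s_def by linarith
  qed
qed

end
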